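(* Let $E$ be a nonzero real Banach space, $K$ be a nonempty $w(E,E^* )$-compact convex subset of $E$ and $\mathbb I_K$ its indicator function. (a) If $y^{**}\in(\partial\mathbb I_K)^{\mathbb F}(y^* )$ then $y^{**}\in\widehat K$ and $\langle y^*,y^{**}\rangle=\sup_{x\in K}\langle x,y^*\rangle$. (b) $R((\partial\mathbb I_K)^{\mathbb F})\subset\widehat K\subset\widehat E$.
   Context: $\widehat x\in E^{**}$ is the canonical image of $x\in E$; $\widehat K=\{\widehat x:x\in K\}$, $\widehat E=\{\widehat x:x\in E\}$; $\mathbb I_K=0$ on $K$ and $\infty$ elsewhere. For proper convex lsc $f$, $x^*\in\partial f(x)$ iff $f(x)+f^*(x^* )=\langle x,x^*\rangle$; $\partial\mathbb I_K$ is closed, monotone and quasidense. For a multifunction $S\colon E\rightrightarrows E^*$ with nonempty graph: closed means $G(S)$ norm-closed; monotone means $\langle s-t,s^*-t^*\rangle\ge0$ on $G(S)$; quasidense means for every $(x,x^* )$, $\inf_{(s,s^* )\in G(S)}[\tfrac12\|s-x\|^2+\tfrac12\|s^*-x^*\|^2+\langle s-x,s^*-x^*\rangle]\le0$. Let $\varphi_S(x,x^* )=\sup_{(s,s^* )\in G(S)}[\langle s,x^*\rangle+\langle x,s^*\rangle-\langle s,s^*\rangle]$ and $\varphi_S^*$ its conjugate on $E^*\times E^{**}$ under $\langle (x,x^* ),(y^*,y^{**})\rangle=\langle x,y^*\rangle+\langle x^*,y^{**}\rangle$. For $S$ closed, monotone, quasidense, $S^{\mathbb F}\colon E^*\rightrightarrows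 E^{**}$ is given by $(y^*,y^{**})\in G(S^{\mathbb F})$ iff $\varphi_S^*(y^*,y^{**})=\langle y^*,y^{**}\rangle$; $R(\cdot)$ denotes range. *)

theory Defs
  imports "HOL-Analysis.Analysis" "HOL-Library.Extended_Real"
begin

text \<open>Dual E* is 'a \<Rightarrow>L real, bidual E** is ('a \<Rightarrow>L real) \<Rightarrow>L real.
  Pairings: <x,x*> = x* x ; <x*,x**> = x** x*.\<close>

definition weak_topology :: "('a::real_normed_vector) topology" where
  "weak_topology = topology_generated_by
      {blinfun_apply f -` U | (f :: 'a \<Rightarrow>\<^sub>L real) U. open U}"

definition canon :: "'a::real_normed_vector \<Rightarrow> (('a \<Rightarrow>\<^sub>L real) \<Rightarrow>\<^sub>L real)" where
  "canon x = Blinfun (\<lambda>f. blinfun_apply f x)"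

definition indic_fun :: "'a set \<Rightarrow> 'a \<Rightarrow> ereal" where
  "indic_fun K x = (if x \<in> K then 0 else \<infinity>)"

definition subdiff :: "('a::real_normed_vector \<Rightarrow> ereal) \<Rightarrow> 'a \<Rightarrow> ('a \<Rightarrow>\<^sub>L real) set" where
  "subdiff f x = {xs. f x \<noteq> \<infinity> \<and> (\<forall>y. f x + ereal (blinfun_apply xs (y - x)) \<le> f y)}"

definition graph :: "('a \<Rightarrow> 'b set) \<Rightarrow> ('a \<times> 'b) set" where
  "graph S = {(x, xs). xs \<in> S x}"

definition phi :: "('a::real_normed_vector \<Rightarrow> ('a \<Rightarrow>\<^sub>L real) set) \<Rightarrow> 'a \<Rightarrow> ('a \<Rightarrow>\<^sub>L real) \<Rightarrow> ereal" where
  "phi S x xs = (SUP p \<in> graph S.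
      ereal (blinfun_apply xs (fst p) + blinfun_apply (snd p) x - blinfun_apply (snd p) (fst p)))"

definition phi_conj :: "('a::real_normed_vector \<Rightarrow> ('a \<Rightarrow>\<^sub>L real) set)
     \<Rightarrow> ('a \<Rightarrow>\<^sub>L real) \<Rightarrow> (('a \<Rightarrow>\<^sub>L real) \<Rightarrow>\<^sub>L real) \<Rightarrow> ereal" where
  "phi_conj S ys yss = (SUP p \<in> (UNIV :: ('a \<times> ('a \<Rightarrow>\<^sub>L real)) set).
      ereal (blinfun_apply ys (fst p) + blinfun_apply yss (snd p)) - phi S (fst p) (snd p))"

definition SF :: "('a::real_normed_vector \<Rightarrow> ('a \<Rightarrow>\<^sub>L real) set)
     \<Rightarrow> ('a \<Rightarrow>\<^sub>L real) \<Rightarrow> (('a \<Rightarrow>\<^sub>L real) \<Rightarrow>\<^sub>L real) set" where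
  "SF S ys = {yss. phi_conj S ys yss = ereal (blinfun_apply yss ys)}"

definition mrange :: "('a \<Rightarrow> 'b set) \<Rightarrow> 'b set" where
  "mrange S = (\<Union>x. S x)"

end

theory Submission
  imports Defs begin

lemma weak_topspace: "topspace (weak_topology :: 'a::real_normed_vector topology) = UNIV"
proof -
  have "UNIV \<in> {blinfun_apply f -` U | (f :: 'a \<Rightarrow>\<^sub>L real) U. open U}" by blast
  then show ?thesis unfolding weak_topology_def topology_generated_by_topspace by blast
qed

lemma weak_cont: "continuous_map weak_topology euclideanreal (blinfun_apply (f :: 'a::real_normed_vector \<Rightarrow>\<^sub>L real))"
  unfolding continuous_map_def weak_topspace
proof (intro conjI allI impI)
  fix U :: "real set" assume "openin euclideanreal U"
  then have "open U" by simp
  then have "blinfun_apply f -` U \<in> {blinfun_apply f -` U | (f :: 'a \<Rightarrow>\<^sub>L real) U. open U}" by blast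
  then have "openin weak_topology (blinfun_apply f -` U)"
    unfolding weak_topology_def by (rule topology_generated_by_Basis)
  moreover have "{x \<in> UNIV. blinfun_apply f x \<in> U} = blinfun_apply f -` U" by auto
  ultimately show "openin weak_topology {x \<in> UNIV. blinfun_apply f x \<in> U}" by simp
qed auto

lemma graph_sub:
  assumes "(s, ss) \<in> graph (subdiff (indic_fun K))"
  shows "s \<in> K \<and> (\<forall>y\<in>K. blinfun_apply ss (y - s) \<le> 0)"
proof -
  have h: "indic_fun K s \<noteq> \<infinity>" "\<And>y. indic_fun K s + ereal (blinfun_apply ss (y - s)) \<le> indic_fun K y"
    using assms unfolding graph_def subdiff_def by auto
  then have "s \<in> K" unfolding indic_fun_def by (auto split: if_splits)
  moreover have "blinfun_apply ss (y - s) \<le> 0" if "y \<in> K" for y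
    using h(2)[of y] \<open>s \<in> K\<close> that unfolding indic_fun_def by simp
  ultimately show ?thesis by auto
qed

lemma phi_le:
  assumes "\<forall>k\<in>K. blinfun_apply g k \<le> c" "x \<in> K"
  shows "phi (subdiff (indic_fun K)) x g \<le> ereal c"
  unfolding phi_def
proof (rule SUP_least)
  fix p assume "p \<in> graph (subdiff (indic_fun K))"
  then obtain s ss where p: "p = (s, ss)" "(s, ss) \<in> graph (subdiff (indic_fun K))" by (cases p) auto
  from graph_sub[OF p(2)] have "s \<in> K" "blinfun_apply ss (x - s) \<le> 0" using assms by auto
  then show "ereal (blinfun_apply g (fst p) + blinfun_apply (snd p) x - blinfun_apply (snd p) (fst p)) \<le> ereal c"
  proof -
    have "blinfun_apply g s \<le> c" using assms \<open>s \<in> K\<close> by auto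
    then show ?thesis using \<open>blinfun_apply ss (x - s) \<le> 0\<close> p by (simp add: blinfun.diff_right)
  qed
qed

lemma key:
  assumes "phi_conj (subdiff (indic_fun K)) ys yss = ereal (blinfun_apply yss ys)"
    and "x \<in> K" "\<forall>k\<in>K. blinfun_apply g k \<le> blinfun_apply g x"
  shows "blinfun_apply ys x + blinfun_apply yss g - blinfun_apply g x \<le> blinfun_apply yss ys"
proof -
  have "ereal (blinfun_apply ys x + blinfun_apply yss g) - phi (subdiff (indic_fun K)) x g
       \<le> phi_conj (subdiff (indic_fun K)) ys yss"
    unfolding phi_conj_def by (rule SUP_upper2[of "(x, g)"]) auto
  moreover have "ereal (blinfun_apply ys x + blinfun_apply yss g) - ereal (blinfun_apply g x)
     \<le> ereal (blinfun_apply ys x + blinfun_apply yss g) - phi (subdiff (indic_fun K)) x g"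
    using phi_le[OF assms(3) assms(2)] by (intro ereal_minus_mono) auto
  ultimately have "ereal (blinfun_apply ys x + blinfun_apply yss g) - ereal (blinfun_apply g x) \<le> ereal (blinfun_apply yss ys)"
    using assms(1) by (metis (no_types) order.trans)
  then have "ereal (blinfun_apply ys x + blinfun_apply yss g - blinfun_apply g x) \<le> ereal (blinfun_apply yss ys)"
    by simp
  then show ?thesis by simp
qed


lemma finite_step:
  fixes K :: "'a::real_normed_vector set"
  assumes conj: "phi_conj (subdiff (indic_fun K)) ys yss = ereal (blinfun_apply yss ys)"
    and ne: "K \<noteq> {}" and cpt: "compactin weak_topology K" and cvx: "convex K" and fin: "finite F"
  shows "\<exists>k0\<in>K. \<forall>f\<in>F. blinfun_apply f k0 = blinfun_apply yss f"
proof -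
  define h where "h k = (\<Sum>f\<in>F. (blinfun_apply f k - blinfun_apply yss f) * (blinfun_apply f k - blinfun_apply yss f))" for k
  have cont: "continuous_map weak_topology euclideanreal h"
    unfolding h_def
    by (intro continuous_map_sum fin continuous_map_real_mult continuous_map_diff weak_cont continuous_map_const[THEN iffD2]) auto
  have "compact (h ` K)"
    using image_compactin[OF cpt cont] by simp
  then obtain hm where "hm \<in> h ` K" "\<forall>t\<in>h ` K. hm \<le> t"
    using compact_attains_inf[of "h ` K"] ne by blast
  then obtain k0 where k0: "k0 \<in> K" "\<And>k. k \<in> K \<Longrightarrow> h k0 \<le> h k" by auto
  define c :: "('a \<Rightarrow>\<^sub>L real) \<Rightarrow> real" where "c f = blinfun_apply yss f - blinfun_apply f k0" for f
  define xs where "xs = (\<Sum>f\<in>F. c f *\<^sub>R f)"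
  have xs_apply: "blinfun_apply xs k = (\<Sum>f\<in>F. c f * blinfun_apply f k)" for k
    unfolding xs_def by (simp add: blinfun.sum_left blinfun.scaleR_left)
  have yss_xs: "blinfun_apply yss xs = (\<Sum>f\<in>F. c f * blinfun_apply yss f)"
    unfolding xs_def by (simp add: blinfun.sum_right blinfun.scaleR_right)
  have maxp: "blinfun_apply xs k \<le> blinfun_apply xs k0" if kK: "k \<in> K" for k
  proof -
    define d :: "('a \<Rightarrow>\<^sub>L real) \<Rightarrow> real" where "d f = blinfun_apply f k - blinfun_apply f k0" for f
    define a :: "('a \<Rightarrow>\<^sub>L real) \<Rightarrow> real" where "a f = blinfun_apply f k0 - blinfun_apply yss f" for f
    define A where "A = (\<Sum>f\<in>F. a f * d f)"
    define B where "B = (\<Sum>f\<in>F. d f * d f)"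
    have B0: "B \<ge> 0" unfolding B_def by (intro sum_nonneg) auto
    have step: "0 \<le> 2 * A + t * B" if t: "0 < t" "t \<le> 1" for t
    proof -
      define kt where "kt = (1 - t) *\<^sub>R k0 + t *\<^sub>R k"
      have "kt \<in> K" unfolding kt_def using cvx k0(1) kK t
        by (simp add: convex_def)
      have fkt: "blinfun_apply f kt = blinfun_apply f k0 + t * d f" for f
        unfolding kt_def d_def by (simp add: blinfun.add_right blinfun.scaleR_right blinfun.diff_right scaleR_diff_left algebra_simps)
      have "h kt = (\<Sum>f\<in>F. a f * a f + t * (2 * (a f * d f)) + (t * t) * (d f * d f))"
        unfolding h_def fkt a_def by (intro sum.cong) (auto simp: algebra_simps)
      also have "\<dots> = h k0 + t * (2 * A) + (t * t) * B"
        unfolding h_def A_def B_def a_def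
        by (simp add: sum.distrib sum_distrib_left)
      finally have "h k0 \<le> h k0 + t * (2 * A) + (t * t) * B" using k0(2)[OF \<open>kt \<in> K\<close>] by simp
      then have "0 \<le> t * (2 * A + t * B)" by (simp add: algebra_simps)
      then show ?thesis using t by (simp add: zero_le_mult_iff)
    qed
    have "A \<ge> 0"
    proof (rule ccontr)
      assume "\<not> A \<ge> 0"
      then have An: "A < 0" by simp
      show False
      proof (cases "B = 0")
        case True then show False using step[of 1] An by simp
      next
        case False
        then have Bp: "B > 0" using B0 by simp
        define t where "t = min 1 (- A / B)"
        have "0 < t" "t \<le> 1" unfolding t_def using An Bp by (auto simp: divide_neg_pos)
        moreover have "t * B \<le> - A" unfolding t_def using Bp
          by (metis min.cobounded2 mult.commute mult_left_mono less_imp_le nonzero_divide_eq_eq mult.commute less_irrefl)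
        ultimately show False using step[of t] An by linarith
      qed
    qed
    moreover have "blinfun_apply xs k - blinfun_apply xs k0 = - A"
      unfolding xs_apply A_def a_def d_def c_def
      by (simp add: sum_subtractf[symmetric] sum_negf[symmetric] algebra_simps)
    ultimately show ?thesis by simp
  qed
  define D where "D = (\<Sum>f\<in>F. c f * c f)"
  have D0: "D \<ge> 0" unfolding D_def by (intro sum_nonneg) auto
  have Deq: "blinfun_apply yss xs - blinfun_apply xs k0 = D"
    unfolding yss_xs xs_apply D_def c_def
    by (simp add: sum_subtractf[symmetric] algebra_simps)
  have tD: "t * D \<le> blinfun_apply yss ys - blinfun_apply ys k0" if "t \<ge> 0" for t
  proof -
    have "\<forall>k\<in>K. blinfun_apply (t *\<^sub>R xs) k \<le> blinfun_apply (t *\<^sub>R xs) k0"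
      using maxp that by (simp add: blinfun.scaleR_left mult_left_mono)
    from key[OF conj k0(1) this]
    have "blinfun_apply ys k0 + t * blinfun_apply yss xs - t * blinfun_apply xs k0 \<le> blinfun_apply yss ys"
      by (simp add: blinfun.scaleR_right blinfun.scaleR_left)
    then show ?thesis using Deq by (simp add: algebra_simps right_diff_distrib[symmetric])
  qed
  have "D = 0"
  proof (rule ccontr)
    assume "D \<noteq> 0"
    then have Dp: "D > 0" using D0 by simp
    define t where "t = (\<bar>blinfun_apply yss ys - blinfun_apply ys k0\<bar> + 1) / D"
    have "t \<ge> 0" unfolding t_def using Dp by simp
    have "t * D = \<bar>blinfun_apply yss ys - blinfun_apply ys k0\<bar> + 1" unfolding t_def using Dp by simp
    then show False using tD[OF \<open>t \<ge> 0\<close>] by simp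
  qed
  then have "\<forall>f\<in>F. c f * c f = 0" unfolding D_def using fin
    by (subst (asm) sum_nonneg_eq_0_iff) auto
  then show ?thesis using k0(1) unfolding c_def by (intro bexI[of _ k0]) auto
qed


lemma exists_k:
  fixes K :: "'a::real_normed_vector set"
  assumes conj: "phi_conj (subdiff (indic_fun K)) ys yss = ereal (blinfun_apply yss ys)"
    and ne: "K \<noteq> {}" and cpt: "compactin weak_topology K" and cvx: "convex K"
  shows "\<exists>k\<in>K. \<forall>f. blinfun_apply f k = blinfun_apply yss f"
proof (rule ccontr)
  assume nex: "\<not> ?thesis"
  define U where "U f = {x. blinfun_apply f x \<noteq> blinfun_apply yss f}" for f :: "'a \<Rightarrow>\<^sub>L real"
  have op: "openin weak_topology (U f)" for f
  proof -
    have "U f = blinfun_apply f -` (- {blinfun_apply yss f})" unfolding U_def by auto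
    then have "U f \<in> {blinfun_apply f -` U | (f :: 'a \<Rightarrow>\<^sub>L real) U. open U}" by blast
    then show ?thesis unfolding weak_topology_def by (rule topology_generated_by_Basis)
  qed
  have cov: "K \<subseteq> \<Union> (range U)" using nex unfolding U_def by auto
  obtain G where G: "finite G" "G \<subseteq> range U" "K \<subseteq> \<Union> G"
    using cpt cov op unfolding compactin_def by (metis (no_types, lifting) imageE)
  obtain F where F: "finite F" "G = U ` F"
    using finite_subset_image[OF G(1) G(2)] by blast
  obtain k0 where "k0 \<in> K" "\<forall>f\<in>F. blinfun_apply f k0 = blinfun_apply yss f"
    using finite_step[OF conj ne cpt cvx F(1)] by blast
  then show False using G(3) F(2) unfolding U_def by auto
qed

theorem lemma3p5:
  fixes K :: "'a::banach set"
  assumes "\<exists>x::'a. x \<noteq> 0"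
    and "K \<noteq> {}"
    and "compactin weak_topology K"
    and "convex K"
  shows "((\<forall>ys yss. yss \<in> SF (subdiff (indic_fun K)) ys \<longrightarrow>
            yss \<in> canon ` K \<and> blinfun_apply yss ys = (SUP x\<in>K. blinfun_apply ys x))) \<and>
         (mrange (SF (subdiff (indic_fun K))) \<subseteq> canon ` K \<and> canon ` K \<subseteq> canon ` (UNIV :: 'a set))"
proof -
  have A: "yss \<in> canon ` K \<and> blinfun_apply yss ys = (SUP x\<in>K. blinfun_apply ys x)"
    if "yss \<in> SF (subdiff (indic_fun K)) ys" for ys yss
  proof -
    have conj: "phi_conj (subdiff (indic_fun K)) ys yss = ereal (blinfun_apply yss ys)"
      using that unfolding SF_def by simp
    obtain k where k: "k \<in> K" "\<And>f. blinfun_apply f k = blinfun_apply yss f"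
      using exists_k[OF conj assms(2-4)] by blast
    have ck: "canon k = yss"
      unfolding canon_def
      by (rule blinfun_eqI) (simp add: bounded_linear_Blinfun_apply blinfun.bounded_linear_left k(2) blinfun_apply_inverse)
    have le: "blinfun_apply ys x \<le> blinfun_apply ys k" if "x \<in> K" for x
    proof -
      have "\<forall>k\<in>K. blinfun_apply (0 :: 'a \<Rightarrow>\<^sub>L real) k \<le> blinfun_apply 0 x" by simp
      from key[OF conj that this] show ?thesis using k(2)[of ys] by simp
    qed
    have "(SUP x\<in>K. blinfun_apply ys x) = blinfun_apply ys k"
      using k(1) le by (intro cSup_eq_maximum) auto
    then show ?thesis using ck k by auto
  qed
  show ?thesis
    using A unfolding mrange_def by blast
qed

end
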